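(* Let $D\ge1$, let $Q_D$ be the $D$-dimensional hypercube on $X=\{0,1\}^D$ with adjacency matrix $A$, and let $E_0V$ be the eigenspace of $A$ in $V=\mathbb{R}^X$ for the eigenvalue $D$. Then $BE_0V=0$ for every antisymmetric $A$-like matrix $B$.
   Context: $Q_D$ is the graph with vertex set $X=\{0,1\}^D$, two vertices adjacent iff they differ in exactly one coordinate. Matrices are real with rows and columns indexed by $X$ and act on $V=\mathbb{R}^X$. A matrix $B$ is $A$-like if $BA=AB$ and $B_{xy}=0$ for all $x,y\in X$ that are neither equal nor adjacent; it is antisymmetric if $B^t=-B$. *)

theory Defs
  imports Complex_Main
begin

definition hcube :: "nat \<Rightarrow> bool list set" where
  "hcube D = {xs. length xs = D}"

definition hadj :: "nat \<Rightarrow> bool list \<Rightarrow> bool list \<Rightarrow> bool" where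
  "hadj D x y \<longleftrightarrow> card {i. i < D \<and> x ! i \<noteq> y ! i} = 1"

text \<open>Matrices with rows and columns indexed by X are functions X -> X -> real
  (only values on X matter); vectors in V = R^X are functions X -> real.\<close>
definition adjA :: "nat \<Rightarrow> bool list \<Rightarrow> bool list \<Rightarrow> real" where
  "adjA D x y = (if hadj D x y then 1 else 0)"

definition mmult :: "nat \<Rightarrow> (bool list \<Rightarrow> bool list \<Rightarrow> real) \<Rightarrow> (bool list \<Rightarrow> bool list \<Rightarrow> real)
    \<Rightarrow> bool list \<Rightarrow> bool list \<Rightarrow> real" where
  "mmult D M N x y = (\<Sum>z\<in>hcube D. M x z * N z y)"

definition mvec :: "nat \<Rightarrow> (bool list \<Rightarrow> bool list \<Rightarrow> real) \<Rightarrow> (bool list \<Rightarrow> real)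
    \<Rightarrow> bool list \<Rightarrow> real" where
  "mvec D M v x = (\<Sum>y\<in>hcube D. M x y * v y)"

definition A_like :: "nat \<Rightarrow> (bool list \<Rightarrow> bool list \<Rightarrow> real) \<Rightarrow> bool" where
  "A_like D B \<longleftrightarrow>
     (\<forall>x\<in>hcube D. \<forall>y\<in>hcube D. mmult D B (adjA D) x y = mmult D (adjA D) B x y) \<and>
     (\<forall>x\<in>hcube D. \<forall>y\<in>hcube D. x \<noteq> y \<and> \<not> hadj D x y \<longrightarrow> B x y = 0)"

definition antisymmetric :: "nat \<Rightarrow> (bool list \<Rightarrow> bool list \<Rightarrow> real) \<Rightarrow> bool" where
  "antisymmetric D B \<longleftrightarrow> (\<forall>x\<in>hcube D. \<forall>y\<in>hcube D. B y x = - B x y)"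

definition E0V :: "nat \<Rightarrow> (bool list \<Rightarrow> real) set" where
  "E0V D = {v. \<forall>x\<in>hcube D. mvec D (adjA D) v x = real D * v x}"

end

theory Submission
  imports Defs
begin

lemma hadj_sym: "hadj D x y = hadj D y x"
  unfolding hadj_def by (simp add: eq_commute)

definition flip :: "bool list \<Rightarrow> nat \<Rightarrow> bool list" where
  "flip x i = x[i := \<not> x ! i]"

lemma nbrs: assumes "x \<in> hcube D"
  shows "{y \<in> hcube D. hadj D x y} = flip x ` {..<D}"
proof (intro equalityI subsetI)
  fix y assume "y \<in> {y \<in> hcube D. hadj D x y}"
  hence y: "length y = D" "card {i. i < D \<and> x ! i \<noteq> y ! i} = 1"
    by (auto simp: hcube_def hadj_def)
  then obtain i where i: "{i. i < D \<and> x ! i \<noteq> y ! i} = {i}" by (auto simp: card_1_singleton_iff)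
  have "y = flip x i"
  proof (rule nth_equalityI)
    show "length y = length (flip x i)" using assms y by (simp add: hcube_def flip_def)
    fix j assume "j < length y"
    thus "y ! j = flip x i ! j" using i y assms unfolding flip_def hcube_def
      by (cases "j = i") auto
  qed
  moreover have "i < D" using i by auto
  ultimately show "y \<in> flip x ` {..<D}" by auto
next
  fix y assume "y \<in> flip x ` {..<D}"
  then obtain i where i: "i < D" "y = flip x i" by auto
  have "{j. j < D \<and> x ! j \<noteq> y ! j} = {i}" using i assms
    by (auto simp: flip_def hcube_def nth_list_update)
  thus "y \<in> {y \<in> hcube D. hadj D x y}" using i assms
    by (simp add: hadj_def hcube_def flip_def)
qed

lemma card_nbrs: assumes "x \<in> hcube D"
  shows "card {y \<in> hcube D. hadj D x y} = D"
proof -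
  have "inj_on (flip x) {..<D}"
  proof
    fix i j assume "i \<in> {..<D}" "j \<in> {..<D}" "flip x i = flip x j"
    hence "flip x i ! i = flip x j ! i" by simp
    thus "i = j" using assms \<open>i \<in> {..<D}\<close> \<open>j \<in> {..<D}\<close>
      by (auto simp: flip_def hcube_def nth_list_update split: if_splits)
  qed
  thus ?thesis using nbrs[OF assms] by (simp add: card_image)
qed

lemma fin: "finite (hcube D)"
proof -
  have "hcube D = {xs. set xs \<subseteq> UNIV \<and> length xs = D}" by (auto simp: hcube_def)
  thus ?thesis using finite_lists_length_eq[of "UNIV :: bool set" D] by simp
qed

lemma rowsum: assumes "x \<in> hcube D"
  shows "(\<Sum>y\<in>hcube D. adjA D x y) = real D"
proof -
  have "(\<Sum>y\<in>hcube D. adjA D x y) = (\<Sum>y\<in>{y \<in> hcube D. hadj D x y}. 1)"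
  proof -
    have "hcube D \<inter> Collect (hadj D x) = {y \<in> hcube D. hadj D x y}" by auto
    thus ?thesis unfolding adjA_def using fin by (simp add: sum.If_cases)
  qed
  thus ?thesis using card_nbrs[OF assms] by simp
qed

lemma colsum: assumes "y \<in> hcube D"
  shows "(\<Sum>x\<in>hcube D. adjA D x y) = real D"
  using rowsum[OF assms] by (simp add: adjA_def hadj_sym)

lemma locconst:
  assumes v: "v \<in> E0V D" and x: "x \<in> hcube D" and y: "y \<in> hcube D" and h: "hadj D x y"
  shows "v x = v y"
proof -
  let ?H = "hcube D"
  have Av: "\<And>x. x \<in> ?H \<Longrightarrow> (\<Sum>y\<in>?H. adjA D x y * v y) = real D * v x"
    using v by (auto simp: E0V_def mvec_def)
  have "(\<Sum>x\<in>?H. \<Sum>y\<in>?H. adjA D x y * (v x - v y)^2)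
      = (\<Sum>x\<in>?H. \<Sum>y\<in>?H. adjA D x y * (v x)^2)
        - 2 * (\<Sum>x\<in>?H. v x * (\<Sum>y\<in>?H. adjA D x y * v y))
        + (\<Sum>x\<in>?H. \<Sum>y\<in>?H. adjA D x y * (v y)^2)"
    by (simp add: power2_diff algebra_simps sum.distrib sum_subtractf sum_distrib_left)
  also have "(\<Sum>x\<in>?H. \<Sum>y\<in>?H. adjA D x y * (v x)^2) = (\<Sum>x\<in>?H. real D * (v x)^2)"
    by (rule sum.cong) (auto simp: sum_distrib_right[symmetric] rowsum)
  also have "(\<Sum>x\<in>?H. v x * (\<Sum>y\<in>?H. adjA D x y * v y)) = (\<Sum>x\<in>?H. real D * (v x)^2)"
    by (rule sum.cong) (auto simp: Av power2_eq_square)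
  also have "(\<Sum>x\<in>?H. \<Sum>y\<in>?H. adjA D x y * (v y)^2) = (\<Sum>y\<in>?H. \<Sum>x\<in>?H. adjA D x y * (v y)^2)"
    by (rule sum.swap)
  also have "\<dots> = (\<Sum>x\<in>?H. real D * (v x)^2)"
    by (rule sum.cong) (auto simp: sum_distrib_right[symmetric] colsum)
  finally have Z: "(\<Sum>x\<in>?H. \<Sum>y\<in>?H. adjA D x y * (v x - v y)^2) = 0" by simp
  have nn: "\<And>x y. 0 \<le> adjA D x y * (v x - v y)^2" by (simp add: adjA_def)
  have "(\<Sum>y\<in>?H. adjA D x y * (v x - v y)^2) = 0"
    using Z sum_nonneg_eq_0_iff[OF fin, where f="\<lambda>x. \<Sum>y\<in>?H. adjA D x y * (v x - v y)^2"] x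
    by (simp add: sum_nonneg nn)
  hence "adjA D x y * (v x - v y)^2 = 0"
    using sum_nonneg_eq_0_iff[OF fin, where f="\<lambda>y. adjA D x y * (v x - v y)^2"] y nn by simp
  thus ?thesis using h by (simp add: adjA_def)
qed

theorem lemma9p1:
  fixes D :: nat and B :: "bool list \<Rightarrow> bool list \<Rightarrow> real"
  assumes "D \<ge> 1" and "A_like D B" and "antisymmetric D B"
  shows "\<forall>v\<in>E0V D. \<forall>x\<in>hcube D. mvec D B v x = 0"
proof (intro ballI)
  fix v x assume v: "v \<in> E0V D" and x: "x \<in> hcube D"
  let ?H = "hcube D"
  define w where "w = mvec D B v"
  have comm: "\<And>x y. x \<in> ?H \<Longrightarrow> y \<in> ?H \<Longrightarrow> mmult D B (adjA D) x y = mmult D (adjA D) B x y"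
    and zero: "\<And>x y. x \<in> ?H \<Longrightarrow> y \<in> ?H \<Longrightarrow> x \<noteq> y \<Longrightarrow> \<not> hadj D x y \<Longrightarrow> B x y = 0"
    using assms(2) unfolding A_like_def by blast+
  have anti: "\<And>x y. x \<in> ?H \<Longrightarrow> y \<in> ?H \<Longrightarrow> B y x = - B x y"
    using assms(3) unfolding antisymmetric_def by blast
  have Av: "\<And>x. x \<in> ?H \<Longrightarrow> (\<Sum>y\<in>?H. adjA D x y * v y) = real D * v x"
    using v by (auto simp: E0V_def mvec_def)
  have wE: "w \<in> E0V D"
    unfolding E0V_def
  proof (intro CollectI ballI)
    fix x assume x: "x \<in> ?H"
    have "mvec D (adjA D) w x = (\<Sum>y\<in>?H. adjA D x y * (\<Sum>z\<in>?H. B y z * v z))"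
      by (simp add: mvec_def w_def)
    also have "\<dots> = (\<Sum>y\<in>?H. \<Sum>z\<in>?H. adjA D x y * B y z * v z)"
      by (simp add: sum_distrib_left mult.assoc)
    also have "\<dots> = (\<Sum>z\<in>?H. \<Sum>y\<in>?H. adjA D x y * B y z * v z)"
      by (rule sum.swap)
    also have "\<dots> = (\<Sum>z\<in>?H. mmult D (adjA D) B x z * v z)"
      by (simp add: mmult_def sum_distrib_right)
    also have "\<dots> = (\<Sum>z\<in>?H. mmult D B (adjA D) x z * v z)"
      by (rule sum.cong) (auto simp: comm x)
    also have "\<dots> = (\<Sum>z\<in>?H. \<Sum>y\<in>?H. B x y * adjA D y z * v z)"
      by (simp add: mmult_def sum_distrib_right)
    also have "\<dots> = (\<Sum>y\<in>?H. \<Sum>z\<in>?H. B x y * adjA D y z * v z)"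
      by (rule sum.swap)
    also have "\<dots> = (\<Sum>y\<in>?H. B x y * (\<Sum>z\<in>?H. adjA D y z * v z))"
      by (simp add: sum_distrib_left mult.assoc)
    also have "\<dots> = (\<Sum>y\<in>?H. B x y * (real D * v y))"
      by (rule sum.cong) (auto simp: Av)
    also have "\<dots> = real D * w x"
      by (simp add: w_def mvec_def sum_distrib_left algebra_simps)
    finally show "mvec D (adjA D) w x = real D * w x" .
  qed
  have sw: "\<And>x y. x \<in> ?H \<Longrightarrow> y \<in> ?H \<Longrightarrow> B x y * w x * v y = B x y * w y * v x"
  proof -
    fix x y assume xy: "x \<in> ?H" "y \<in> ?H"
    show "B x y * w x * v y = B x y * w y * v x"
    proof (cases "x = y \<or> hadj D x y")
      case True
      thus ?thesis using locconst[OF v xy] locconst[OF wE xy] by auto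
    next
      case False thus ?thesis using zero[OF xy] by auto
    qed
  qed
  define S where "S = (\<Sum>x\<in>?H. \<Sum>y\<in>?H. B x y * w x * v y)"
  have S1: "S = (\<Sum>x\<in>?H. w x * w x)"
    unfolding S_def w_def mvec_def
    by (rule sum.cong) (auto simp: sum_distrib_left algebra_simps)
  have "S = (\<Sum>x\<in>?H. \<Sum>y\<in>?H. B x y * w y * v x)"
    unfolding S_def by (intro sum.cong refl) (rule sw)
  also have "\<dots> = (\<Sum>y\<in>?H. \<Sum>x\<in>?H. B x y * w y * v x)" by (rule sum.swap)
  also have "\<dots> = (\<Sum>y\<in>?H. \<Sum>x\<in>?H. - (B y x * w y * v x))"
    by (intro sum.cong refl) (metis anti mult_minus_left minus_minus)
  also have "\<dots> = - S" unfolding S_def by (simp add: sum_negf)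
  finally have "S = 0" by simp
  hence "(\<Sum>x\<in>?H. (w x)^2) = 0" using S1 by (simp add: power2_eq_square)
  hence "(w x)^2 = 0" using sum_nonneg_eq_0_iff[OF fin, where f="\<lambda>x. (w x)^2"] x by simp
  thus "mvec D B v x = 0" by (simp add: w_def)
qed

end
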